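(* Let $\varphi$ be the endomorphism of the free group $F_2$ on $\{a,b\}$ defined by $a\varphi=a^2$ and $b\varphi=a^2b^2a^{-2}$. Then $\varphi$ is an almost strictly length-increasing monomorphism of $F_2$ which is not length-increasing.
   Context: Elements of a free group are identified with reduced words and $|u|$ is the length of the reduced word $u$; maps are written on the right. An endomorphism $\varphi$ of $F_n$ is length-increasing if $|u\varphi|\geq|u|$ for all $u\in F_n$, and almost strictly length-increasing if $|u\varphi|\leq|u|$ for only finitely many $u\in F_n$. *)

theory Defs
  imports Main
begin

text \<open>Free group on a generating type 'g: elements are reduced words over letters
  (b, g), where b = False means the generator g and b = True means its inverse.\<close>

type_synonym 'g letter = "bool \<times> 'g"
type_synonym 'g word = "'g letter list"

definition inv_letter :: "'g letter \<Rightarrow> 'g letter" where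
  "inv_letter x = (\<not> fst x, snd x)"

fun reduced :: "'g word \<Rightarrow> bool" where
  "reduced [] = True"
| "reduced [x] = True"
| "reduced (x # y # ys) = (y \<noteq> inv_letter x \<and> reduced (y # ys))"

fun push :: "'g letter \<Rightarrow> 'g word \<Rightarrow> 'g word" where
  "push x [] = [x]"
| "push x (y # ys) = (if y = inv_letter x then ys else x # y # ys)"

definition reduce :: "'g word \<Rightarrow> 'g word" where
  "reduce w = foldr push w []"

definition inv_word :: "'g word \<Rightarrow> 'g word" where
  "inv_word w = rev (map inv_letter w)"

definition endo :: "('g \<Rightarrow> 'g word) \<Rightarrow> 'g word \<Rightarrow> 'g word" where
  "endo f u = reduce (concat (map (\<lambda>x. if fst x then inv_word (f (snd x)) else f (snd x)) u))"

definition monomorphism :: "('g \<Rightarrow> 'g word) \<Rightarrow> bool" where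
  "monomorphism f \<longleftrightarrow> inj_on (endo f) {u. reduced u}"

definition length_increasing :: "('g \<Rightarrow> 'g word) \<Rightarrow> bool" where
  "length_increasing f \<longleftrightarrow> (\<forall>u. reduced u \<longrightarrow> length u \<le> length (endo f u))"

definition almost_strictly_length_increasing :: "('g \<Rightarrow> 'g word) \<Rightarrow> bool" where
  "almost_strictly_length_increasing f \<longleftrightarrow>
     finite {u. reduced u \<and> length (endo f u) \<le> length u}"

datatype gen2 = a | b

fun phi_gen :: "gen2 \<Rightarrow> gen2 word" where
  "phi_gen a = [(False, a), (False, a)]"
| "phi_gen b = [(False, a), (False, a), (False, b), (False, b), (True, a), (True, a)]"

end

theory Submission
  imports Defs
begin

lemma inv_inv[simp]: "inv_letter (inv_letter x) = x"
  by (simp add: inv_letter_def)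

lemma inv_neq[simp]: "inv_letter x \<noteq> x"
  by (cases x) (simp add: inv_letter_def)

lemma inv_neq2[simp]: "x \<noteq> inv_letter x"
  by (cases x) (simp add: inv_letter_def)

lemma inv_eq_iff: "(inv_letter x = y) = (x = inv_letter y)"
  by auto

lemma push_reduced: "reduced t \<Longrightarrow> reduced (push x t)"
  by (induction x t rule: push.induct) (auto simp: reduced.simps elim: reduced.elims)

lemma reduced_tl: "reduced (x # t) \<Longrightarrow> reduced t"
  by (cases t) auto

lemma push_cancel: "reduced t \<Longrightarrow> push x (push (inv_letter x) t) = t"
proof (cases t)
  case Nil then show ?thesis by simp
next
  case (Cons y r)
  assume rt: "reduced t"
  show ?thesis
  proof (cases "y = x")
    case True
    then have "push (inv_letter x) t = r" using Cons by simp
    moreover have "push x r = x # r"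
    proof (cases r)
      case Nil then show ?thesis by simp
    next
      case (Cons z q)
      then have "z \<noteq> inv_letter x" using rt \<open>t = y # r\<close> True by simp
      then show ?thesis using Cons by simp
    qed
    ultimately show ?thesis using Cons True by simp
  next
    case False
    then have "push (inv_letter x) t = inv_letter x # t" using Cons by (auto simp: inv_eq_iff)
    then show ?thesis by simp
  qed
qed

lemma foldr_push_reduced: "reduced t \<Longrightarrow> reduced (foldr push w t)"
  by (induction w) (auto intro: push_reduced)

lemma reduce_reduced: "reduced (reduce w)"
  unfolding reduce_def by (rule foldr_push_reduced) simp

lemma foldr_push_push: "reduced r \<Longrightarrow> reduced s \<Longrightarrow> foldr push (push x r) s = push x (foldr push r s)"
proof (cases r)
  case Nil then show ?thesis by simp
next
  case (Cons y r')
  assume rr: "reduced r" and ss: "reduced s"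
  show ?thesis
  proof (cases "y = inv_letter x")
    case True
    have "reduced (foldr push r' s)" using ss by (rule foldr_push_reduced)
    then have "push x (push y (foldr push r' s)) = foldr push r' s"
      using True push_cancel by simp
    then show ?thesis using Cons True by simp
  next
    case False then show ?thesis using Cons by simp
  qed
qed

lemma key: "reduced s \<Longrightarrow> foldr push (foldr push w []) s = foldr push w s"
proof (induction w)
  case Nil then show ?case by simp
next
  case (Cons x w)
  have "reduced (foldr push w [])" by (rule foldr_push_reduced) simp
  then show ?case using Cons foldr_push_push[OF _ Cons.prems] by simp
qed

lemma push_length: "length (push x t) \<le> Suc (length t)"
  by (cases "(x,t)" rule: push.cases) auto

lemma foldr_push_length: "length (foldr push w t) \<le> length w + length t"
proof (induction w)
  case Nil then show ?case by simp
next
  case (Cons x w)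
  then show ?case using push_length[of x "foldr push w t"] by simp
qed

lemma reduce_id: "reduced w \<Longrightarrow> reduce w = w"
proof (induction w)
  case Nil then show ?case by (simp add: reduce_def)
next
  case (Cons x w)
  then have ih: "foldr push w [] = w" using reduced_tl[OF Cons.prems] by (auto simp: reduce_def)
  show ?case
  proof (cases w)
    case Nil then show ?thesis by (simp add: reduce_def)
  next
    case (Cons y r)
    then have "y \<noteq> inv_letter x" using Cons.prems by simp
    then show ?thesis using ih Cons by (simp add: reduce_def)
  qed
qed

abbreviation "aa \<equiv> [(False, a), (False, a)]"
abbreviation "AA \<equiv> [(True, a), (True, a)]"

definition dbl :: "gen2 letter \<Rightarrow> gen2 word" where "dbl x = [x, x]"
definition D :: "gen2 word \<Rightarrow> gen2 word" where "D u = concat (map dbl u)"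
definition img :: "gen2 letter \<Rightarrow> gen2 word" where
  "img x = (if fst x then inv_word (phi_gen (snd x)) else phi_gen (snd x))"

lemma cancel1: "reduced t \<Longrightarrow> foldr push AA (foldr push aa t) = t"
proof -
  assume t: "reduced t"
  have r1: "reduced (push (False,a) t)" using t push_reduced by blast
  have "push (True,a) (push (False,a) t) = t" using push_cancel[OF t, of "(True,a)"]
    by (simp add: inv_letter_def)
  moreover have "push (True,a) (push (True,a) (push (False,a) (push (False,a) t))) =
     push (True,a) (push (False,a) t)" using push_cancel[OF r1, of "(True,a)"]
    by (simp add: inv_letter_def)
  ultimately show ?thesis by simp
qed

lemma cancel2: "reduced t \<Longrightarrow> foldr push aa (foldr push AA t) = t"
proof -
  assume t: "reduced t"
  have r1: "reduced (push (True,a) t)" using t push_reduced by blast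
  have "push (False,a) (push (True,a) t) = t" using push_cancel[OF t, of "(False,a)"]
    by (simp add: inv_letter_def)
  moreover have "push (False,a) (push (False,a) (push (True,a) (push (True,a) t))) =
     push (False,a) (push (True,a) t)" using push_cancel[OF r1, of "(False,a)"]
    by (simp add: inv_letter_def)
  ultimately show ?thesis by simp
qed

lemma img_step: "reduced t \<Longrightarrow> foldr push (img x) (foldr push aa t) = foldr push (aa @ dbl x) t"
proof -
  assume t: "reduced t"
  obtain s g where x: "x = (s, g)" by fastforce
  show ?thesis
  proof (cases g)
    case a
    then show ?thesis using x cancel1[OF t] cancel2[OF t]
      by (cases s) (auto simp: img_def dbl_def inv_word_def inv_letter_def)
  next
    case b
    have r: "reduced (foldr push aa t)" using t foldr_push_reduced by blast
    have "foldr push (img x) (foldr push aa t) =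
          foldr push aa (foldr push [(s,b),(s,b)] (foldr push AA (foldr push aa t)))"
      using x b by (cases s) (auto simp: img_def inv_word_def inv_letter_def)
    also have "\<dots> = foldr push aa (foldr push [(s,b),(s,b)] t)"
      using cancel1[OF t] by simp
    finally show ?thesis using x b by (cases s) (auto simp: dbl_def)
  qed
qed

lemma endo_formula: "reduce (concat (map img u)) = reduce (aa @ D u @ AA)"
proof (induction u)
  case Nil
  then show ?case by (simp add: reduce_def D_def inv_letter_def)
next
  case (Cons x u)
  have t: "reduced (reduce (D u @ AA))" by (rule reduce_reduced)
  have "reduce (concat (map img (x # u))) = foldr push (img x) (reduce (concat (map img u)))"
    by (simp add: reduce_def)
  also have "\<dots> = foldr push (img x) (foldr push aa (reduce (D u @ AA)))"
    using Cons by (simp add: reduce_def)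
  also have "\<dots> = foldr push (aa @ dbl x) (reduce (D u @ AA))"
    using img_step[OF t] .
  also have "\<dots> = reduce (aa @ D (x # u) @ AA)"
    by (simp add: reduce_def D_def)
  finally show ?case .
qed

lemma endo_eq: "endo phi_gen u = reduce (aa @ D u @ AA)"
  unfolding endo_def using endo_formula[of u] by (simp add: img_def[abs_def])

lemma D_reduced: "reduced u \<Longrightarrow> reduced (D u)"
proof (induction u rule: reduced.induct)
  case 1 then show ?case by (simp add: D_def)
next
  case (2 x) then show ?case by (simp add: D_def dbl_def)
next
  case (3 x y ys)
  then have "reduced (D (y # ys))" by simp
  then show ?case using 3 by (simp add: D_def dbl_def)
qed

lemma D_length: "length (D u) = 2 * length u"
  by (induction u) (auto simp: D_def dbl_def)

lemma D_inj: "D u = D v \<Longrightarrow> u = v"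
proof (induction u arbitrary: v)
  case Nil then show ?case by (cases v) (auto simp: D_def dbl_def)
next
  case (Cons x u)
  then show ?case by (cases v) (auto simp: D_def dbl_def)
qed

lemma back_lem: "reduced u \<Longrightarrow> reduce (AA @ endo phi_gen u @ aa) = D u"
proof -
  assume u: "reduced u"
  have aar: "reduced aa" by simp
  let ?W = "aa @ D u @ AA"
  have "reduce (AA @ endo phi_gen u @ aa) = foldr push AA (foldr push (foldr push ?W []) aa)"
    by (simp add: endo_eq reduce_def)
  also have "\<dots> = foldr push AA (foldr push ?W aa)"
    using key[OF aar, of ?W] by simp
  also have "\<dots> = foldr push AA (foldr push aa (foldr push (D u) []))"
    by (simp add: inv_letter_def)
  also have "\<dots> = foldr push (D u) []"
    by (rule cancel1) (rule foldr_push_reduced, simp)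
  also have "\<dots> = D u" using reduce_id[OF D_reduced[OF u]] by (simp add: reduce_def)
  finally show ?thesis .
qed

lemma len_bound: "reduced u \<Longrightarrow> 2 * length u \<le> length (endo phi_gen u) + 4"
proof -
  assume u: "reduced u"
  have "2 * length u = length (reduce (AA @ endo phi_gen u @ aa))"
    using back_lem[OF u] D_length by simp
  also have "\<dots> \<le> length (AA @ endo phi_gen u @ aa)"
    unfolding reduce_def using foldr_push_length[of "AA @ endo phi_gen u @ aa" "[]"] by simp
  finally show ?thesis by simp
qed

lemma gen2_UNIV: "(UNIV :: gen2 set) = {a, b}"
  using gen2.exhaust by auto

lemma letter_finite: "finite (UNIV :: gen2 letter set)"
proof -
  have "finite (UNIV :: gen2 set)" by (subst gen2_UNIV) simp
  moreover have "finite (UNIV :: bool set)" by simp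
  ultimately show ?thesis using finite_Prod_UNIV by blast
qed

theorem mainTheorem7:
  shows "monomorphism phi_gen \<and> almost_strictly_length_increasing phi_gen
         \<and> \<not> length_increasing phi_gen"
proof (intro conjI)
  show "monomorphism phi_gen"
    unfolding monomorphism_def inj_on_def
  proof (intro ballI impI)
    fix u v assume "u \<in> {u. reduced u}" "v \<in> {u. reduced u}" "endo phi_gen u = endo phi_gen v"
    then have "D u = D v" using back_lem by (metis mem_Collect_eq)
    then show "u = v" by (rule D_inj)
  qed
  show "almost_strictly_length_increasing phi_gen"
    unfolding almost_strictly_length_increasing_def
  proof (rule finite_subset)
    show "{u. reduced u \<and> length (endo phi_gen u) \<le> length u} \<subseteq> {xs. set xs \<subseteq> UNIV \<and> length xs \<le> 4}"
      using len_bound by fastforce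
    show "finite {xs. set xs \<subseteq> (UNIV :: gen2 letter set) \<and> length xs \<le> 4}"
      by (rule finite_lists_length_le) (rule letter_finite)
  qed
  show "\<not> length_increasing phi_gen"
    unfolding length_increasing_def
  proof
    assume h: "\<forall>u. reduced u \<longrightarrow> length u \<le> length (endo phi_gen u)"
    let ?u = "[(True, a), (False, b), (False, a)]"
    have "reduced ?u" by (simp add: inv_letter_def)
    moreover have "endo phi_gen ?u = [(False,b),(False,b)]"
      by (simp add: endo_def reduce_def inv_word_def inv_letter_def)
    ultimately have "length ?u \<le> length [(False,b),(False,b)]" using h[rule_format, of ?u] by simp
    then show False by simp
  qed
qed

end
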